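(* Let $n,k$ be integers with $n\ge 97$ and $\frac{3n}{4}\le k\le n$. Then $$\overline{\mathrm{dist}}_F(\mathcal{S}^{n,k},\mathcal{S}^n_+)\le 96\left(\frac{n-k}{n}\right)^{3/2}.$$
   Context: $\mathcal{S}^n_+$ denotes the cone of $n\times n$ real symmetric positive semidefinite (PSD) matrices. For integers $2\le k\le n$, the $k$-PSD closure $\mathcal{S}^{n,k}$ is the set of all $n\times n$ real symmetric matrices all of whose $k\times k$ principal submatrices are PSD. For a matrix $M$, $\mathrm{dist}_F(M,\mathcal{S}^n_+)=\inf_{N\in\mathcal{S}^n_+}\|M-N\|_F$, where $\|\cdot\|_F$ is the Frobenius norm. For a set $\mathcal{K}$ of $n\times n$ matrices, $\overline{\mathrm{dist}}_F(\mathcal{K},\mathcal{S}^n_+)=\sup_{M\in\mathcal{K},\ \|M\|_F=1}\mathrm{dist}_F(M,\mathcal{S}^n_+)$. *)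

theory Defs
  imports "HOL-Analysis.Analysis"
begin

text \<open>Real n x n matrices are represented as real^'n^'n, with n = CARD('n).\<close>

definition symmetric_mat :: "real^'n^'n \<Rightarrow> bool" where
  "symmetric_mat M \<longleftrightarrow> transpose M = M"

definition psd_cone :: "(real^'n^'n) set" where
  "psd_cone = {M. symmetric_mat M \<and> (\<forall>x::real^'n. 0 \<le> x \<bullet> (M *v x))}"

definition principal_psd :: "real^'n^'n \<Rightarrow> 'n set \<Rightarrow> bool" where
  "principal_psd M I \<longleftrightarrow>
     (\<forall>x::'n \<Rightarrow> real. 0 \<le> (\<Sum>i\<in>I. \<Sum>j\<in>I. x i * M $ i $ j * x j))"

definition k_psd_closure :: "nat \<Rightarrow> (real^'n^'n) set" where
  "k_psd_closure k = {M. symmetric_mat M \<and>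
      (\<forall>I::'n set. card I = k \<longrightarrow> principal_psd M I)}"

definition frob_norm :: "real^'n^'n \<Rightarrow> real" where
  "frob_norm M = sqrt (\<Sum>i\<in>UNIV. \<Sum>j\<in>UNIV. (M $ i $ j)\<^sup>2)"

definition dist_F_psd :: "real^'n^'n \<Rightarrow> real" where
  "dist_F_psd M = (INF N\<in>psd_cone. frob_norm (M - N))"

definition dist_F_bar :: "(real^'n^'n) set \<Rightarrow> real" where
  "dist_F_bar K = (SUP M\<in>{M\<in>K. frob_norm M = 1}. dist_F_psd M)"

end

theory Submission
  imports Defs
begin

lemma inner_mat: "inner (A::real^'n^'n) B = (\<Sum>i\<in>UNIV. \<Sum>j\<in>UNIV. A$i$j * B$i$j)"
  by (simp add: inner_vec_def)

lemma norm_sq_mat: "(norm (A::real^'n^'n))^2 = (\<Sum>i\<in>UNIV. \<Sum>j\<in>UNIV. (A$i$j)^2)"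
proof -
  have "(norm A)^2 = inner A A" by (rule power2_norm_eq_inner)
  then show ?thesis by (simp add: inner_mat power2_eq_square)
qed

lemma frob_norm_eq: "frob_norm A = norm A"
  unfolding frob_norm_def by (simp add: norm_sq_mat[symmetric])

lemma quad_form: "x \<bullet> ((A::real^'n^'n) *v x) = (\<Sum>i\<in>UNIV. \<Sum>j\<in>UNIV. x$i * A$i$j * x$j)"
  by (simp add: inner_vec_def matrix_vector_mult_def sum_distrib_left mult.commute mult.left_commute)

lemma cont_entry: "continuous_on UNIV (\<lambda>M::real^'n^'n. M$i$j)"
proof -
  have "bounded_linear (\<lambda>M::real^'n^'n. M$i$j)"
    using bounded_linear_compose[OF bounded_linear_vec_nth[of j] bounded_linear_vec_nth[of i]] by (simp add: o_def)
  then show ?thesis by (simp add: linear_continuous_on)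
qed

lemma closed_psd: "closed (psd_cone :: (real^'n^'n) set)"
proof -
  have "psd_cone = (\<Inter>i. \<Inter>j. {M::real^'n^'n. M$j$i = M$i$j}) \<inter> (\<Inter>x. {M::real^'n^'n. 0 \<le> (\<Sum>i\<in>UNIV. \<Sum>j\<in>UNIV. x$i * M$i$j * x$j)})"
    by (auto simp: psd_cone_def symmetric_mat_def quad_form[symmetric] vec_eq_iff transpose_def)
  moreover have "closed {M::real^'n^'n. M$j$i = M$i$j}" for i j
    by (rule closed_Collect_eq[OF cont_entry cont_entry])
  moreover have "closed {M::real^'n^'n. 0 \<le> (\<Sum>i\<in>UNIV. \<Sum>j\<in>UNIV. x$i * M$i$j * x$j)}" for x
    by (intro closed_Collect_le continuous_on_const continuous_on_sum continuous_on_mult cont_entry)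
  ultimately show ?thesis by (metis (no_types, lifting) closed_INT closed_Int)
qed

definition qf :: "real^'n^'n \<Rightarrow> real^'n \<Rightarrow> real" where
  "qf A x = (\<Sum>i\<in>UNIV. \<Sum>j\<in>UNIV. x$i * A$i$j * x$j)"

lemma psd_iff: "M \<in> psd_cone \<longleftrightarrow> (\<forall>i j. M$i$j = M$j$i) \<and> (\<forall>x. 0 \<le> qf M x)"
  by (auto simp: psd_cone_def symmetric_mat_def quad_form qf_def vec_eq_iff transpose_def)

lemma qf_add: "qf (A + B) x = qf A x + qf B x"
  by (simp add: qf_def algebra_simps sum.distrib)

lemma qf_scale: "qf (c *\<^sub>R A) x = c * qf A x"
  by (simp add: qf_def algebra_simps sum_distrib_left)

lemma convex_psd: "convex (psd_cone :: (real^'n^'n) set)"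
  unfolding convex_def
  by (auto simp: psd_iff qf_add qf_scale intro!: add_nonneg_nonneg mult_nonneg_nonneg)

lemma qf_inner: "qf A x = x \<bullet> (A *v x)"
  by (simp add: qf_def quad_form)

lemma psd_sym: "M \<in> psd_cone \<Longrightarrow> transpose M = M"
  by (simp add: psd_cone_def symmetric_mat_def)

lemma psd_nonneg: "M \<in> psd_cone \<Longrightarrow> 0 \<le> x \<bullet> (M *v x)"
  by (simp add: psd_cone_def)

lemma psd_intro: "transpose M = M \<Longrightarrow> (\<And>x. 0 \<le> x \<bullet> (M *v x)) \<Longrightarrow> M \<in> psd_cone"
  by (simp add: psd_cone_def symmetric_mat_def)

lemma sym_inner: "transpose (Q::real^'n^'n) = Q \<Longrightarrow> x \<bullet> (Q *v z) = (Q *v x) \<bullet> z"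
  by (metis dot_lmul_matrix transpose_matrix_vector)

lemma quad_zero_lemma:
  fixes b c :: real
  assumes "\<And>t. 0 \<le> b * t + c * t^2"
  shows "b = 0"
proof (rule ccontr)
  assume b: "b \<noteq> 0"
  obtain D where D: "D = \<bar>c\<bar> + 1" by blast
  then have d: "D > 0" "c < D" by auto
  define t where "t = - b / D"
  have "b * t + c * t^2 = (b^2 / D^2) * (c - D)"
    unfolding t_def using d by (simp add: field_simps power2_eq_square)
  also have "\<dots> < 0"
    using b d by (intro mult_pos_neg) auto
  finally show False using assms[of t] by simp
qed

lemma transpose_add: "transpose (A + B) = transpose A + transpose (B::real^'n^'n)"
  by (simp add: transpose_def vec_eq_iff)

lemma transpose_diff: "transpose (A - B) = transpose A - transpose (B::real^'n^'n)"
  by (simp add: transpose_def vec_eq_iff)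

lemma psd_null:
  assumes P: "P \<in> psd_cone" and z: "y \<bullet> (P *v y) = 0"
  shows "P *v y = 0"
proof -
  let ?z = "P *v y"
  have "0 \<le> (y + t *\<^sub>R ?z) \<bullet> (P *v (y + t *\<^sub>R ?z))" for t
    using psd_nonneg[OF P] by blast
  moreover have "(y + t *\<^sub>R ?z) \<bullet> (P *v (y + t *\<^sub>R ?z)) = (2 * (?z \<bullet> ?z)) * t + (?z \<bullet> (P *v ?z)) * t^2" for t
  proof -
    have s: "y \<bullet> (P *v ?z) = ?z \<bullet> ?z" using sym_inner[OF psd_sym[OF P]] by simp
    show ?thesis
      by (simp add: matrix_vector_right_distrib matrix_vector_mult_scaleR inner_add_left inner_add_right
            z s inner_commute[of ?z y] power2_eq_square algebra_simps)
  qed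
  ultimately have "2 * (?z \<bullet> ?z) = 0" using quad_zero_lemma by metis
  then show ?thesis by simp
qed

lemma inner_transpose: "inner (transpose (A::real^'n^'n)) (transpose B) = inner A B"
  unfolding inner_mat transpose_def by (simp add: sum.swap[of "\<lambda>i j. A $ j $ i * B $ j $ i"])


lemma PQ_zero:
  fixes P Q :: "real^'n^'n"
  assumes P: "P \<in> psd_cone" and Q: "Q \<in> psd_cone"
    and dual: "\<And>X. X \<in> psd_cone \<Longrightarrow> 0 \<le> inner Q X"
    and orth: "inner Q P = 0"
  shows "P ** Q = 0"
proof -
  have sP: "transpose P = P" and sQ: "transpose Q = Q" using P Q psd_sym by auto
  define X where "X t = P + t *\<^sub>R (Q ** P + P ** Q) + (t^2) *\<^sub>R (Q ** P ** Q)" for t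
  have XP: "X t \<in> psd_cone" for t
  proof (rule psd_intro)
    show "transpose (X t) = X t"
      unfolding X_def by (simp add: transpose_add transpose_scalar matrix_transpose_mul sP sQ matrix_mul_assoc algebra_simps)
  next
    fix x
    let ?y = "x + t *\<^sub>R (Q *v x)"
    define u where "u = Q *v x"
    define p where "p = P *v x"
    define pu where "pu = P *v u"
    have e1: "X t *v x = p + t *\<^sub>R (Q *v p + pu) + (t^2) *\<^sub>R (Q *v pu)"
      unfolding X_def u_def p_def pu_def
      by (simp add: matrix_vector_mult_add_rdistrib scaleR_matrix_vector_assoc[symmetric]
           matrix_vector_mul_assoc[symmetric])
    have e2: "x \<bullet> (X t *v x) = x \<bullet> p + t * (u \<bullet> p + x \<bullet> pu) + t^2 * (u \<bullet> pu)"
      unfolding e1 using sym_inner[OF sQ, of x p] sym_inner[OF sQ, of x pu]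
      by (simp add: inner_add_right u_def)
    have e3: "P *v ?y = p + t *\<^sub>R pu"
      by (simp add: matrix_vector_right_distrib matrix_vector_mult_scaleR p_def pu_def u_def)
    have e4: "u \<bullet> p = x \<bullet> pu"
      using sym_inner[OF sP, of u x] by (simp add: p_def pu_def inner_commute)
    have "?y \<bullet> (P *v ?y) = x \<bullet> p + t * (u \<bullet> p + x \<bullet> pu) + t^2 * (u \<bullet> pu)"
      unfolding e3 using e4 by (simp add: inner_add_left inner_add_right u_def[symmetric] power2_eq_square algebra_simps)
    have "x \<bullet> (X t *v x) = ?y \<bullet> (P *v ?y)"
      using e2 \<open>?y \<bullet> (P *v ?y) = _\<close> by simp
    then show "0 \<le> x \<bullet> (X t *v x)" using psd_nonneg[OF P] by simp
  qed
  have "inner Q (Q ** P) = inner Q (P ** Q)"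
    using inner_transpose[of Q "P ** Q"] by (simp add: matrix_transpose_mul sP sQ)
  then have "inner Q (X t) = (2 * inner Q (P ** Q)) * t + inner Q (Q ** P ** Q) * t^2" for t
    unfolding X_def by (simp add: inner_add_right orth algebra_simps)
  then have b0: "inner Q (P ** Q) = 0"
    using quad_zero_lemma[of "2 * inner Q (P ** Q)" "inner Q (Q ** P ** Q)"] dual[OF XP] by simp
  define col where "col l = (\<chi> i. Q$i$l)" for l
  have r1: "(\<Sum>l\<in>UNIV. col l \<bullet> (P *v col l)) = (\<Sum>j\<in>UNIV. \<Sum>i\<in>UNIV. Q$i$j * (\<Sum>k\<in>UNIV. P$i$k * Q$k$j))"
    by (simp add: col_def inner_vec_def matrix_vector_mult_def)
  have r2: "inner Q (P ** Q) = (\<Sum>i\<in>UNIV. \<Sum>j\<in>UNIV. Q$i$j * (\<Sum>k\<in>UNIV. P$i$k * Q$k$j))"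
    by (simp add: inner_mat matrix_matrix_mult_def)
  have "inner Q (P ** Q) = (\<Sum>l\<in>UNIV. col l \<bullet> (P *v col l))"
    unfolding r1 r2 by (rule sum.swap)
  with b0 have s0: "(\<Sum>l\<in>UNIV. col l \<bullet> (P *v col l)) = 0" by simp
  have "col l \<bullet> (P *v col l) = 0" for l
    using sum_nonneg_eq_0_iff[of UNIV "\<lambda>l. col l \<bullet> (P *v col l)"] s0 psd_nonneg[OF P] by auto
  then have "P *v col l = 0" for l by (rule psd_null[OF P])
  then show ?thesis
    by (simp add: vec_eq_iff matrix_matrix_mult_def matrix_vector_mult_def col_def)
qed

definition outer :: "real^'n \<Rightarrow> real^'n^'n" where
  "outer x = (\<chi> i j. x$i * x$j)"

lemma inner_outer: "inner A (outer x) = x \<bullet> (A *v x)"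
  by (simp add: inner_mat outer_def quad_form mult_ac)

lemma outer_psd: "outer x \<in> psd_cone"
proof (rule psd_intro)
  show "transpose (outer x) = outer x" by (simp add: outer_def transpose_def vec_eq_iff mult.commute)
  fix y
  have "y \<bullet> (outer x *v y) = (\<Sum>i\<in>UNIV. \<Sum>j\<in>UNIV. y$i * (x$i * x$j) * y$j)"
    unfolding quad_form by (simp add: outer_def)
  also have "\<dots> = (\<Sum>i\<in>UNIV. x$i * y$i) * (\<Sum>j\<in>UNIV. x$j * y$j)"
    by (simp add: sum_product mult_ac)
  also have "\<dots> = (x \<bullet> y)^2" by (simp add: inner_vec_def power2_eq_square)
  finally have "y \<bullet> (outer x *v y) = (x \<bullet> y)^2" .
  then show "0 \<le> y \<bullet> (outer x *v y)" by simp
qed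

lemma zero_psd: "0 \<in> psd_cone"
  by (rule psd_intro) (auto simp: transpose_def vec_eq_iff)

lemma scale_psd: "X \<in> psd_cone \<Longrightarrow> 0 \<le> c \<Longrightarrow> c *\<^sub>R X \<in> psd_cone"
  by (rule psd_intro) (auto simp: transpose_scalar psd_sym scaleR_matrix_vector_assoc[symmetric] psd_nonneg)

lemma decomp:
  fixes M :: "real^'n^'n"
  assumes sM: "transpose M = M"
  obtains P Q where "P \<in> psd_cone" "Q \<in> psd_cone" "M = P - Q" "P ** Q = 0" "norm P \<le> norm M"
    "dist_F_psd M \<le> norm Q" "\<And>X. X \<in> psd_cone \<Longrightarrow> 0 \<le> inner Q X"
proof -
  define P where "P = closest_point psd_cone M"
  have ne: "psd_cone \<noteq> ({} :: (real^'n^'n) set)" using zero_psd by auto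
  have Pin: "P \<in> psd_cone" unfolding P_def by (rule closest_point_in_set[OF closed_psd ne])
  have opt: "\<forall>y\<in>psd_cone. dist M P \<le> dist M y" unfolding P_def by (rule closest_point_exists(2)[OF closed_psd ne])
  have vi: "inner (M - P) (X - P) \<le> 0" if "X \<in> psd_cone" for X
    by (rule any_closest_point_dot[OF convex_psd closed_psd Pin that opt])
  have a1: "inner (M - P) (0 - P) \<le> 0" by (rule vi[OF zero_psd])
  have a2: "inner (M - P) (2 *\<^sub>R P - P) \<le> 0" by (rule vi[OF scale_psd[OF Pin]]) simp
  have a2': "inner (M - P) (2 *\<^sub>R P - P) = inner (M - P) P"
    by (simp add: scaleR_2)
  have orth0: "inner (M - P) P = 0" using a1 a2 a2' by (simp add: inner_diff_right)
  define Q where "Q = P - M"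
  have dual: "0 \<le> inner Q X" if "X \<in> psd_cone" for X
    using vi[OF that] orth0 by (simp add: Q_def inner_diff_right inner_minus_left algebra_simps)
  have sQ: "transpose Q = Q" unfolding Q_def by (simp add: transpose_diff sM psd_sym[OF Pin])
  have Qin: "Q \<in> psd_cone"
  proof (rule psd_intro[OF sQ])
    fix x show "0 \<le> x \<bullet> (Q *v x)" using dual[OF outer_psd[of x]] by (simp add: inner_outer)
  qed
  have orth: "inner Q P = 0" using orth0 by (simp add: Q_def inner_minus_left)
      (metis inner_diff_left minus_diff_eq neg_equal_0_iff_equal)
  have PQ: "P ** Q = 0" by (rule PQ_zero[OF Pin Qin dual orth])
  have MPQ: "M = P - Q" by (simp add: Q_def)
  have "(norm M)^2 = (norm P)^2 + (norm Q)^2"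
    unfolding MPQ by (simp add: power2_norm_eq_inner inner_diff_left inner_diff_right inner_commute[of P Q] orth)
  then have "(norm P)^2 \<le> (norm M)^2" by simp
  then have nP: "norm P \<le> norm M" by (simp add: power_mono_iff[symmetric] power2_le_iff_abs_le)
  have "dist_F_psd M \<le> frob_norm (M - P)"
    unfolding dist_F_psd_def
    by (rule cINF_lower[OF _ Pin]) (auto simp: bdd_below_def frob_norm_def intro!: exI[of _ 0] sum_nonneg)
  also have "\<dots> = norm Q" by (simp add: frob_norm_eq Q_def norm_minus_commute)
  finally show ?thesis using that Pin Qin MPQ PQ nP dual by blast
qed

lemma sum_if_restrict: "(\<Sum>i\<in>UNIV. if i \<in> S then f i else 0) = (\<Sum>i\<in>S. f i)" for f :: "'n::finite \<Rightarrow> real"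
  by (simp add: sum.If_cases)

lemma sum_compl: "(\<Sum>i\<in>UNIV - T. f i) = (\<Sum>i\<in>UNIV. f i) - (\<Sum>i\<in>T. f i)" for f :: "'n::finite \<Rightarrow> real"
  by (simp add: sum_diff)

lemma sum_if2: "(\<Sum>i\<in>UNIV. \<Sum>j\<in>UNIV. if i \<in> S then (if j \<in> S then f i j else 0) else 0) = (\<Sum>i\<in>S. \<Sum>j\<in>S. f i j)"
  for f :: "'n::finite \<Rightarrow> 'n \<Rightarrow> real"
proof -
  have "(\<Sum>j\<in>UNIV. if i \<in> S then (if j \<in> S then f i j else 0) else 0) = (if i \<in> S then (\<Sum>j\<in>S. f i j) else 0)" for i
    by (cases "i \<in> S") (simp_all add: sum_if_restrict)
  then show ?thesis by (simp add: sum_if_restrict)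
qed

lemma perT:
  fixes M P Q :: "real^'n^'n"
  assumes Pin: "P \<in> psd_cone" and Qin: "Q \<in> psd_cone" and MPQ: "M = P - Q" and PQ: "P ** Q = 0"
    and dual: "\<And>X. X \<in> psd_cone \<Longrightarrow> 0 \<le> inner Q X"
    and pp: "principal_psd M (UNIV - T)"
  shows "(norm Q)^2 \<le> 2 * (\<Sum>i\<in>T. \<Sum>j\<in>UNIV. (Q$i$j)^2) + (\<Sum>i\<in>T. \<Sum>j\<in>T. P$i$j * Q$i$j)"
proof -
  define S where "S = UNIV - T"
  have sP: "\<And>i j. P$i$j = P$j$i" using Pin by (simp add: psd_iff)
  have sQ: "\<And>i j. Q$i$j = Q$j$i" using Qin by (simp add: psd_iff)
  define X where "X = (\<chi> i j. if i \<in> S then (if j \<in> S then M$i$j else 0) else 0)"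
  have Xin: "X \<in> psd_cone"
    unfolding psd_iff
  proof (intro conjI allI)
    fix i j
    have sM: "M$i$j = M$j$i" unfolding MPQ using sP[of i j] sQ[of i j] by simp
    show "X$i$j = X$j$i" unfolding X_def using sM by (cases "i \<in> S"; cases "j \<in> S") auto
  next
    fix x
    have e: "x$i * X$i$j * x$j = (if i \<in> S then (if j \<in> S then x$i * M$i$j * x$j else 0) else 0)" for i j
      by (simp add: X_def)
    have "qf X x = (\<Sum>i\<in>S. \<Sum>j\<in>S. x$i * M$i$j * x$j)"
      unfolding qf_def e by (rule sum_if2)
    then show "0 \<le> qf X x" using pp unfolding principal_psd_def S_def by simp
  qed
  have e2: "Q$i$j * X$i$j = (if i \<in> S then (if j \<in> S then Q$i$j * M$i$j else 0) else 0)" for i j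
    by (simp add: X_def)
  have "inner Q X = (\<Sum>i\<in>S. \<Sum>j\<in>S. Q$i$j * M$i$j)"
    unfolding inner_mat e2 by (rule sum_if2)
  with dual[OF Xin] have key: "0 \<le> (\<Sum>i\<in>S. \<Sum>j\<in>S. P$i$j * Q$i$j - (Q$i$j)^2)"
    unfolding MPQ by (simp add: algebra_simps power2_eq_square)
  have row: "(\<Sum>j\<in>UNIV. P$i$j * Q$i$j) = 0" for i
  proof -
    have "(P ** Q)$i$i = 0" using PQ by simp
    then show ?thesis by (simp add: matrix_matrix_mult_def sQ[of _ i])
  qed
  have col: "(\<Sum>i\<in>UNIV. P$i$j * Q$i$j) = 0" for j
    using row[of j] by (simp add: sP[of _ j] sQ[of _ j])
  have g1: "(\<Sum>i\<in>S. \<Sum>j\<in>S. P$i$j * Q$i$j) = - (\<Sum>i\<in>S. \<Sum>j\<in>T. P$i$j * Q$i$j)"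
    unfolding S_def sum_compl row by (simp add: sum_negf)
  also have "\<dots> = - (\<Sum>j\<in>T. \<Sum>i\<in>S. P$i$j * Q$i$j)" by (subst sum.swap) simp
  also have "\<dots> = (\<Sum>j\<in>T. \<Sum>i\<in>T. P$i$j * Q$i$j)"
    unfolding S_def sum_compl col by (simp add: sum_negf)
  also have "\<dots> = (\<Sum>i\<in>T. \<Sum>j\<in>T. P$i$j * Q$i$j)" by (rule sum.swap)
  finally have g: "(\<Sum>i\<in>S. \<Sum>j\<in>S. P$i$j * Q$i$j) = (\<Sum>i\<in>T. \<Sum>j\<in>T. P$i$j * Q$i$j)" .
  have h1: "(\<Sum>i\<in>S. \<Sum>j\<in>S. (Q$i$j)^2) = (\<Sum>i\<in>UNIV. \<Sum>j\<in>UNIV. (Q$i$j)^2) - (\<Sum>i\<in>T. \<Sum>j\<in>UNIV. (Q$i$j)^2) - (\<Sum>i\<in>S. \<Sum>j\<in>T. (Q$i$j)^2)"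
    unfolding S_def sum_compl by (simp add: sum_subtractf)
  have h2: "(\<Sum>i\<in>S. \<Sum>j\<in>T. (Q$i$j)^2) \<le> (\<Sum>i\<in>UNIV. \<Sum>j\<in>T. (Q$i$j)^2)"
    by (rule sum_mono2) (auto intro!: sum_nonneg)
  have h3: "(\<Sum>i\<in>UNIV. \<Sum>j\<in>T. (Q$i$j)^2) = (\<Sum>i\<in>T. \<Sum>j\<in>UNIV. (Q$i$j)^2)"
  proof -
    have e: "(Q$i$j)^2 = (Q$j$i)^2" for i j using sQ[of i j] by simp
    show ?thesis by (subst sum.swap) (rule sum.cong[OF refl], rule sum.cong[OF refl], rule e)
  qed
  have k2: "(\<Sum>i\<in>S. \<Sum>j\<in>S. (Q$i$j)^2) \<le> (\<Sum>i\<in>S. \<Sum>j\<in>S. P$i$j * Q$i$j)"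
    using key by (simp add: sum_subtractf)
  show ?thesis
    using k2 g h1 h2 h3 norm_sq_mat[of Q] by linarith
qed

lemma qf_outer: "y \<bullet> (outer x *v y) = (x \<bullet> y)^2"
proof -
  have "y \<bullet> (outer x *v y) = (\<Sum>i\<in>UNIV. \<Sum>j\<in>UNIV. y$i * (x$i * x$j) * y$j)"
    unfolding quad_form by (simp add: outer_def)
  also have "\<dots> = (\<Sum>i\<in>UNIV. x$i * y$i) * (\<Sum>j\<in>UNIV. x$j * y$j)"
    by (simp add: sum_product mult_ac)
  also have "\<dots> = (x \<bullet> y)^2" by (simp add: inner_vec_def power2_eq_square)
  finally show ?thesis .
qed

lemma inner_mat1: "inner Q (mat 1) = (\<Sum>i\<in>UNIV. Q$i$i)"
  by (simp add: inner_mat mat_def if_distrib cong: if_cong)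

lemma trace_bound:
  fixes M P Q :: "real^'n^'n"
  assumes Pin: "P \<in> psd_cone" and Qin: "Q \<in> psd_cone" and MPQ: "M = P - Q" and PQ: "P ** Q = 0"
    and pp: "principal_psd M (UNIV - T0)" and cT: "card T0 = m"
  shows "(\<Sum>i\<in>UNIV. Q$i$i) \<le> sqrt m * norm Q"
proof -
  have sQ: "transpose Q = Q" using psd_sym[OF Qin] .
  define V where "V = range (\<lambda>y. Q *v y)"
  have subV: "subspace V" unfolding V_def
    by (rule linear_subspace_image[OF matrix_vector_mul_linear subspace_UNIV])
  have negV: "v \<bullet> (M *v v) < 0" if vV: "v \<in> V" and v0: "v \<noteq> 0" for v
  proof -
    obtain y where y: "v = Q *v y" using vV unfolding V_def by auto
    have Mv: "M *v v = - (Q *v v)"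
    proof -
      have "P *v v = 0" using PQ by (simp add: y matrix_vector_mul_assoc)
      then show ?thesis by (simp add: MPQ matrix_vector_mult_diff_rdistrib)
    qed
    have "v \<bullet> (Q *v v) \<noteq> 0"
    proof
      assume "v \<bullet> (Q *v v) = 0"
      then have "Q *v v = 0" by (rule psd_null[OF Qin])
      then have "v \<bullet> v = 0" using sym_inner[OF sQ, of y v] y by (simp add: inner_commute)
      then show False using v0 by simp
    qed
    moreover have "0 \<le> v \<bullet> (Q *v v)" by (rule psd_nonneg[OF Qin])
    ultimately show ?thesis by (simp add: Mv)
  qed
  define W where "W = {x::real^'n. \<forall>i\<in>T0. x$i = 0}"
  have subW: "subspace W" unfolding W_def subspace_def by auto
  have posW: "0 \<le> x \<bullet> (M *v x)" if "x \<in> W" for x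
  proof -
    define S0 where "S0 = UNIV - T0"
    have e: "x$i * M$i$j * x$j = (if i \<in> S0 then (if j \<in> S0 then x$i * M$i$j * x$j else 0) else 0)" for i j
    proof -
      have hx: "\<And>i. i \<in> T0 \<Longrightarrow> x$i = 0" using that by (simp add: W_def)
      show ?thesis by (cases "i \<in> T0"; cases "j \<in> T0") (simp_all add: S0_def hx)
    qed
    have "x \<bullet> (M *v x) = (\<Sum>i\<in>UNIV. \<Sum>j\<in>UNIV. if i \<in> S0 then (if j \<in> S0 then x$i * M$i$j * x$j else 0) else 0)"
      unfolding quad_form by (intro sum.cong refl) (rule e)
    also have "\<dots> = (\<Sum>i\<in>S0. \<Sum>j\<in>S0. x$i * M$i$j * x$j)" by (rule sum_if2)
    finally have "x \<bullet> (M *v x) = (\<Sum>i\<in>S0. \<Sum>j\<in>S0. x$i * M$i$j * x$j)" .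
    then show ?thesis using pp unfolding principal_psd_def S0_def by simp
  qed
  have VW: "V \<inter> W \<subseteq> {0}"
    using negV posW by force
  have dVW: "dim (V \<inter> W) = 0" using VW by simp
  define B0 where "B0 = (\<lambda>i. axis i (1::real)) ` (UNIV - T0)"
  have B0W: "B0 \<subseteq> W" unfolding B0_def W_def by (auto simp: axis_def)
  have indB0: "independent B0"
    by (rule independent_mono[OF independent_Basis]) (auto simp: B0_def)
  have cB0: "card B0 = CARD('n) - m"
  proof -
    have "card B0 = card (UNIV - T0)" unfolding B0_def
      by (rule card_image) (auto simp: inj_on_def axis_eq_axis)
    also have "\<dots> = CARD('n) - m" using cT by (simp add: card_Diff_subset)
    finally show ?thesis .
  qed
  have dW: "CARD('n) - m \<le> dim W" using independent_card_le_dim[OF B0W indB0] cB0 by simp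
  have dS: "dim {x + y |x y. x \<in> V \<and> y \<in> W} \<le> CARD('n)" by (rule dim_subset_UNIV_cart)
  have mle: "m \<le> CARD('n)" using cT by (metis card_mono finite subset_UNIV)
  have dV: "dim V \<le> m" using dim_sums_Int[OF subV subW] dVW dW dS mle by linarith
  obtain B where BV: "B \<subseteq> V" and orthB: "pairwise orthogonal B" and nB: "\<And>x. x \<in> B \<Longrightarrow> norm x = 1"
    and indB: "independent B" and cB: "card B = dim V" and spB: "span B = V"
    using orthonormal_basis_subspace[OF subV] by blast
  have finB: "finite B" using indB by (rule finiteI_independent)
  have ip: "b \<bullet> c = (if b = c then 1 else 0)" if "b \<in> B" "c \<in> B" for b c
  proof (cases "b = c")
    case True then show ?thesis using nB[OF that(1)] by (simp add: dot_square_norm)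
  next
    case False then show ?thesis using orthB that by (simp add: pairwise_def orthogonal_def)
  qed
  define Pi where "Pi = (\<Sum>b\<in>B. outer b)"
  have iQPi: "inner Q Pi = (\<Sum>b\<in>B. b \<bullet> (Q *v b))"
    unfolding Pi_def by (simp add: inner_sum_right inner_outer)
  have "inner Pi Pi = (\<Sum>b\<in>B. \<Sum>c\<in>B. (b \<bullet> c)^2)"
    unfolding Pi_def by (simp add: inner_sum_right inner_sum_left inner_outer qf_outer inner_commute)
  also have "\<dots> = (\<Sum>b\<in>B. \<Sum>c\<in>B. if b = c then 1 else 0)"
    by (intro sum.cong refl) (simp add: ip)
  also have "\<dots> = real (card B)" using finB by simp
  finally have nPi: "(norm Pi)^2 = real (card B)" by (simp add: power2_norm_eq_inner)
  have Qz: "Q *v z = 0" if "\<And>b. b \<in> B \<Longrightarrow> z \<bullet> b = 0" for z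
  proof -
    have "orthogonal z a" if "a \<in> V" for a
      using orthogonal_to_span[of a B z] that spB \<open>\<And>b. b \<in> B \<Longrightarrow> z \<bullet> b = 0\<close> by (auto simp: orthogonal_def)
    then have "z \<bullet> (Q *v (Q *v z)) = 0" by (auto simp: orthogonal_def V_def)
    then have "(Q *v z) \<bullet> (Q *v z) = 0" using sym_inner[OF sQ, of z "Q *v z"] by simp
    then show ?thesis by simp
  qed
  define D where "D = mat 1 - Pi"
  define z where "z j = (\<chi> i. D$i$j)" for j
  have Piij: "Pi$i$j = (\<Sum>b\<in>B. b$i * b$j)" for i j
    unfolding Pi_def by (simp add: outer_def sum_component)
  have zb: "z j \<bullet> b = 0" if "b \<in> B" for j b
  proof -
    have m1: "(mat 1::real^'n^'n)$i$j * b$i = (if i = j then b$j else 0)" for i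
      by (simp add: mat_def)
    have "z j \<bullet> b = (\<Sum>i\<in>UNIV. ((mat 1::real^'n^'n)$i$j - Pi$i$j) * b$i)"
      by (simp add: z_def D_def inner_vec_def mult.commute)
    also have "\<dots> = (\<Sum>i\<in>UNIV. (mat 1::real^'n^'n)$i$j * b$i) - (\<Sum>i\<in>UNIV. Pi$i$j * b$i)"
      by (simp add: left_diff_distrib sum_subtractf)
    also have "(\<Sum>i\<in>UNIV. (mat 1::real^'n^'n)$i$j * b$i) = b$j"
      unfolding m1 by simp
    finally have "z j \<bullet> b = b$j - (\<Sum>i\<in>UNIV. (\<Sum>c\<in>B. c$i * c$j) * b$i)"
      by (simp add: Piij)
    also have "(\<Sum>i\<in>UNIV. (\<Sum>c\<in>B. c$i * c$j) * b$i) = (\<Sum>c\<in>B. c$j * (c \<bullet> b))"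
      by (simp add: inner_vec_def sum_distrib_left sum_distrib_right mult_ac) (rule sum.swap)
    also have "\<dots> = (\<Sum>c\<in>B. if c = b then b$j else 0)"
      by (intro sum.cong refl) (simp add: ip[OF _ that])
    also have "\<dots> = b$j" using finB that by simp
    finally show ?thesis by simp
  qed
  have "inner Q D = (\<Sum>j\<in>UNIV. (Q *v z j)$j)"
  proof -
    have "inner Q D = (\<Sum>i\<in>UNIV. \<Sum>j\<in>UNIV. Q$j$i * D$i$j)"
    proof -
      have sQ': "Q$i$j = Q$j$i" for i j using Qin by (simp add: psd_iff)
      show ?thesis unfolding inner_mat by (intro sum.cong refl) (metis sQ')
    qed
    also have "\<dots> = (\<Sum>j\<in>UNIV. \<Sum>i\<in>UNIV. Q$j$i * D$i$j)" by (rule sum.swap)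
    also have "\<dots> = (\<Sum>j\<in>UNIV. (Q *v z j)$j)" by (simp add: matrix_vector_mult_def z_def)
    finally show ?thesis .
  qed
  also have "\<dots> = 0" using Qz zb by simp
  finally have "inner Q D = 0" .
  then have tr: "(\<Sum>i\<in>UNIV. Q$i$i) = inner Q Pi"
    by (simp add: D_def inner_diff_right inner_mat1)
  have c1: "inner Q Pi \<le> norm Q * norm Pi" by (rule norm_cauchy_schwarz)
  have "norm Pi = sqrt (card B)" using nPi by (metis norm_ge_zero real_sqrt_unique)
  also have "\<dots> \<le> sqrt m" using cB dV by simp
  finally have c2: "norm Pi \<le> sqrt m" .
  have "norm Q * norm Pi \<le> norm Q * sqrt m" by (rule mult_left_mono[OF c2 norm_ge_zero])
  then show ?thesis using tr c1 by (simp add: mult.commute)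
qed

lemma swap_gen:
  assumes "finite F" "finite L" "\<And>T. T \<in> F \<Longrightarrow> h T \<subseteq> L"
  shows "(\<Sum>T\<in>F. \<Sum>p\<in>h T. f p) = (\<Sum>p\<in>L. f p * real (card {T\<in>F. p \<in> h T}))"
proof -
  have "(\<Sum>T\<in>F. \<Sum>p\<in>h T. f p) = (\<Sum>T\<in>F. \<Sum>p\<in>{p. p \<in> L \<and> p \<in> h T}. f p)"
  proof (intro sum.cong refl)
    fix T assume "T \<in> F"
    then show "h T = {p. p \<in> L \<and> p \<in> h T}" using assms(3) by blast
  qed
  also have "\<dots> = (\<Sum>p\<in>L. \<Sum>T\<in>{T. T \<in> F \<and> p \<in> h T}. f p)"
    by (rule sum.swap_restrict[OF assms(1,2)])
  also have "\<dots> = (\<Sum>p\<in>L. f p * real (card {T\<in>F. p \<in> h T}))"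
    by (simp add: mult.commute)
  finally show ?thesis .
qed

lemma count_sup:
  assumes fin: "finite L" and BL: "B \<subseteq> L" and Bm: "card B \<le> m"
  shows "card {T. T \<subseteq> L \<and> card T = m \<and> B \<subseteq> T} = (card L - card B) choose (m - card B)"
proof -
  have finB: "finite B" using fin BL finite_subset by blast
  have "bij_betw (\<lambda>T. T - B) {T. T \<subseteq> L \<and> card T = m \<and> B \<subseteq> T} {U. U \<subseteq> L - B \<and> card U = m - card B}"
  proof (rule bij_betw_byWitness[where f' = "\<lambda>U. U \<union> B"])
    show "\<forall>a\<in>{T. T \<subseteq> L \<and> card T = m \<and> B \<subseteq> T}. a - B \<union> B = a" by auto
    show "\<forall>a\<in>{U. U \<subseteq> L - B \<and> card U = m - card B}. a \<union> B - B = a" by auto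
    show "(\<lambda>T. T - B) ` {T. T \<subseteq> L \<and> card T = m \<and> B \<subseteq> T} \<subseteq> {U. U \<subseteq> L - B \<and> card U = m - card B}"
      using finB by (auto simp: card_Diff_subset)
    show "(\<lambda>U. U \<union> B) ` {U. U \<subseteq> L - B \<and> card U = m - card B} \<subseteq> {T. T \<subseteq> L \<and> card T = m \<and> B \<subseteq> T}"
    proof clarify
      fix U assume U: "U \<subseteq> L - B" "card U = m - card B"
      have "finite U" using U fin finite_subset by blast
      then have "card (U \<union> B) = card U + card B" using U finB by (intro card_Un_disjoint) auto
      then show "U \<union> B \<subseteq> L \<and> card (U \<union> B) = m \<and> B \<subseteq> U \<union> B" using U BL Bm by auto
    qed
  qed
  then have "card {T. T \<subseteq> L \<and> card T = m \<and> B \<subseteq> T} = card {U. U \<subseteq> L - B \<and> card U = m - card B}"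
    by (rule bij_betw_same_card)
  also have "\<dots> = card (L - B) choose (m - card B)" using fin by (intro n_subsets) auto
  also have "card (L - B) = card L - card B" using finB BL by (simp add: card_Diff_subset)
  finally show ?thesis .
qed

lemma average:
  fixes L :: "'n::finite set" and r :: "'n \<Rightarrow> real" and g :: "'n \<Rightarrow> 'n \<Rightarrow> real" and Z :: real
  assumes mL: "m \<le> card L" and L2: "2 \<le> card L"
    and H: "\<And>T. T \<subseteq> L \<Longrightarrow> card T = m \<Longrightarrow> Z \<le> 2 * (\<Sum>i\<in>T. r i) + (\<Sum>i\<in>T. \<Sum>j\<in>T. g i j)"
  shows "Z \<le> 2 * (real m / real (card L)) * (\<Sum>i\<in>L. r i)
      + (real m / real (card L) - real m * (real m - 1) / (real (card L) * (real (card L) - 1))) * (\<Sum>i\<in>L. g i i)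
      + (real m * (real m - 1) / (real (card L) * (real (card L) - 1))) * (\<Sum>i\<in>L. \<Sum>j\<in>L. g i j)"
proof -
  define l where "l = card L"
  define F where "F = {T. T \<subseteq> L \<and> card T = m}"
  define A where "A = card F"
  define a where "a = real m / real l"
  define b where "b = real m * (real m - 1) / (real l * (real l - 1))"
  have finL: "finite L" by simp
  have finF: "finite F" unfolding F_def by simp
  have A: "A = l choose m" unfolding A_def F_def l_def using n_subsets[OF finL] by simp
  have Apos: "0 < A" unfolding A using mL l_def by simp
  have l2: "2 \<le> l" using L2 l_def by simp
  have c1: "real (card {T\<in>F. i \<in> T}) = a * A" if iL: "i \<in> L" for i
  proof (cases "m = 0")
    case True
    then have "{T\<in>F. i \<in> T} = {}" unfolding F_def using finL by (auto dest: finite_subset)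
    then show ?thesis using True by (simp add: a_def)
  next
    case False
    have "{T\<in>F. i \<in> T} = {T. T \<subseteq> L \<and> card T = m \<and> {i} \<subseteq> T}" unfolding F_def by auto
    then have "card {T\<in>F. i \<in> T} = (l - 1) choose (m - 1)"
      using count_sup[OF finL, of "{i}" m] iL False unfolding l_def by simp
    moreover have "m * (l choose m) = l * ((l - 1) choose (m - 1))"
      using times_binomial_minus1_eq[of m l] False by simp
    ultimately show ?thesis using l2 unfolding a_def A
      by (simp add: field_simps) (metis of_nat_mult)
  qed
  have c2: "real (card {T\<in>F. i \<in> T \<and> j \<in> T}) = b * A" if iL: "i \<in> L" "j \<in> L" "i \<noteq> j" for i j
  proof (cases "m < 2")
    case True
    have "{T\<in>F. i \<in> T \<and> j \<in> T} = {}"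
    proof (rule ccontr)
      assume "{T\<in>F. i \<in> T \<and> j \<in> T} \<noteq> {}"
      then obtain T where T: "T \<subseteq> L" "card T = m" "i \<in> T" "j \<in> T" unfolding F_def by auto
      have "card {i, j} \<le> card T" using T finL by (intro card_mono) (auto dest: finite_subset)
      then show False using T True iL(3) by simp
    qed
    moreover have "b = 0" using True unfolding b_def by (cases m) auto
    ultimately show ?thesis by simp
  next
    case False
    have "{T\<in>F. i \<in> T \<and> j \<in> T} = {T. T \<subseteq> L \<and> card T = m \<and> {i, j} \<subseteq> T}" unfolding F_def by auto
    then have "card {T\<in>F. i \<in> T \<and> j \<in> T} = (l - 2) choose (m - 2)"
      using count_sup[OF finL, of "{i, j}" m] iL False unfolding l_def by (simp add: numeral_2_eq_2)
    then have eN: "card {T\<in>F. i \<in> T \<and> j \<in> T} = (l - 1 - 1) choose (m - 1 - 1)" by (simp add: numeral_2_eq_2)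
    have e1: "m * (l choose m) = l * ((l - 1) choose (m - 1))"
      using times_binomial_minus1_eq[of m l] False by simp
    have e2: "(m - 1) * ((l - 1) choose (m - 1)) = (l - 1) * ((l - 1 - 1) choose (m - 1 - 1))"
      using times_binomial_minus1_eq[of "m - 1" "l - 1"] False by simp
    have "m * (m - 1) * (l choose m) = (m - 1) * (m * (l choose m))" by (simp add: mult_ac)
    also have "\<dots> = l * ((m - 1) * ((l - 1) choose (m - 1)))" unfolding e1 by (simp add: mult_ac)
    also have "\<dots> = l * (l - 1) * card {T\<in>F. i \<in> T \<and> j \<in> T}" unfolding e2 eN by (simp add: mult_ac)
    finally have en: "m * (m - 1) * (l choose m) = l * (l - 1) * card {T\<in>F. i \<in> T \<and> j \<in> T}" .
    have "real m * (real m - 1) * real (l choose m) = real l * (real l - 1) * real (card {T\<in>F. i \<in> T \<and> j \<in> T})"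
      using arg_cong[OF en, of real] False l2 by (simp add: of_nat_diff)
    then show ?thesis using l2 unfolding b_def A by (simp add: field_simps)
  qed
  have cc: "real (card {T\<in>F. (i, j) \<in> T \<times> T}) = (if i = j then a * A else b * A)" if "i \<in> L" "j \<in> L" for i j
    using c1[OF that(1)] c2[OF that] by auto
  have "(\<Sum>T\<in>F. Z) \<le> (\<Sum>T\<in>F. 2 * (\<Sum>i\<in>T. r i) + (\<Sum>i\<in>T. \<Sum>j\<in>T. g i j))"
    by (rule sum_mono) (auto simp: F_def intro!: H)
  also have "\<dots> = 2 * (\<Sum>T\<in>F. \<Sum>i\<in>T. r i) + (\<Sum>T\<in>F. \<Sum>p\<in>T \<times> T. (\<lambda>(i, j). g i j) p)"
    by (simp add: sum.distrib sum_distrib_left sum.cartesian_product)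
  also have "(\<Sum>T\<in>F. \<Sum>i\<in>T. r i) = (\<Sum>i\<in>L. r i * real (card {T\<in>F. i \<in> T}))"
    by (rule swap_gen[OF finF finL]) (auto simp: F_def)
  also have "\<dots> = (\<Sum>i\<in>L. r i * (a * A))" by (intro sum.cong refl) (simp add: c1)
  also have "\<dots> = a * A * (\<Sum>i\<in>L. r i)" by (simp add: sum_distrib_left mult_ac)
  also have "(\<Sum>T\<in>F. \<Sum>p\<in>T \<times> T. (\<lambda>(i, j). g i j) p) = (\<Sum>p\<in>L \<times> L. (\<lambda>(i, j). g i j) p * real (card {T\<in>F. p \<in> T \<times> T}))"
    by (rule swap_gen[OF finF]) (auto simp: F_def)
  also have "\<dots> = (\<Sum>p\<in>L \<times> L. (\<lambda>(i, j). g i j * (if i = j then a * A else b * A)) p)"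
    by (intro sum.cong refl) (clarsimp simp: c1 c2)
  also have "\<dots> = (\<Sum>i\<in>L. \<Sum>j\<in>L. g i j * (if i = j then a * A else b * A))"
    by (simp add: sum.cartesian_product)
  also have "\<dots> = (\<Sum>i\<in>L. \<Sum>j\<in>L. b * A * g i j + (if i = j then (a - b) * A * g i j else 0))"
    by (intro sum.cong refl) (simp add: algebra_simps)
  also have "\<dots> = b * A * (\<Sum>i\<in>L. \<Sum>j\<in>L. g i j) + (a - b) * A * (\<Sum>i\<in>L. g i i)"
    by (simp add: sum.distrib sum_distrib_left finL)
  finally have "A * Z \<le> A * (2 * a * (\<Sum>i\<in>L. r i) + (a - b) * (\<Sum>i\<in>L. g i i) + b * (\<Sum>i\<in>L. \<Sum>j\<in>L. g i j))"
    by (simp add: A_def sum_distrib_left[symmetric] algebra_simps)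
  then show ?thesis using Apos unfolding a_def b_def l_def by simp
qed

lemma final_arith:
  fixes q a r s :: real
  assumes q0: "0 \<le> q" and a0: "0 \<le> a" and ar: "a \<le> 4/3 * r" and r4: "r \<le> 1/4" and a3: "a \<le> 1/3"
    and s: "s = sqrt r" and r0: "0 \<le> r"
    and H: "q^2 \<le> 2 * a * q^2 + a * (2 * s) * q + a^2 * q"
  shows "q \<le> 96 * (r * s)"
proof (cases "q = 0")
  case True then show ?thesis using s r0 by simp
next
  case False
  then have qp: "0 < q" using q0 by simp
  have s0: "0 \<le> s" using s r0 by simp
  have ss: "s * s = r" unfolding s using r0 by simp
  have sh: "s \<le> 1/2" using s r4 by (metis real_sqrt_four real_sqrt_le_iff real_sqrt_divide real_sqrt_one)
  have "q * q \<le> q * (2 * a * q + a * (2 * s) + a^2)"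
    using H by (simp add: power2_eq_square algebra_simps)
  then have h1: "q \<le> 2 * a * q + a * (2 * s) + a^2" using qp by simp
  have "(1/3) * q \<le> (1 - 2 * a) * q" using a3 qp by (intro mult_right_mono) auto
  then have h2: "q \<le> 6 * (a * s) + 3 * a^2" using h1 by (simp add: algebra_simps)
  have h3: "a * s \<le> (4/3 * r) * s" using ar s0 by (rule mult_right_mono)
  have h4: "a^2 \<le> (4/3 * r)^2" using power_mono[OF ar a0] .
  have h5: "r^2 = (r * s) * s" using ss by (simp add: power2_eq_square mult_ac)
  have rs0: "0 \<le> r * s" using r0 s0 by simp
  have h6: "(r * s) * s \<le> (r * s) * (1/2)" using sh rs0 by (rule mult_left_mono)
  have "(4/3 * r)^2 = 16/9 * r^2" by (simp add: power2_eq_square)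
  then show ?thesis using h2 h3 h4 h5 h6 rs0 by (simp add: algebra_simps)
qed

lemma powr_32: "0 \<le> (r::real) \<Longrightarrow> r powr (3/2) = r * sqrt r"
proof (cases "r = 0")
  case False
  assume "0 \<le> r"
  then have rp: "0 < r" using False by simp
  have "r powr (3/2) = r powr (1 + 1/2)" by simp
  also have "\<dots> = r powr 1 * r powr (1/2)" by (rule powr_add)
  also have "\<dots> = r * sqrt r" using rp by (simp add: powr_half_sqrt)
  finally show ?thesis .
qed simp

lemma diag_nonneg: "P \<in> psd_cone \<Longrightarrow> 0 \<le> (P::real^'n^'n)$i$i"
proof -
  assume P: "P \<in> psd_cone"
  have "axis i 1 \<bullet> (P *v axis i 1) = P$i$i"
    by (simp add: matrix_vector_mult_basis column_def inner_commute[of "axis i 1"] inner_axis)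
  then show ?thesis using psd_nonneg[OF P, of "axis i 1"] by simp
qed

lemma main_bound:
  fixes M :: "real^'n^'n" and k :: nat
  assumes Mk: "M \<in> k_psd_closure k" and nM: "norm M = 1"
    and n97: "CARD('n) \<ge> 97" and kn: "3 * real CARD('n) / 4 \<le> real k" and kle: "k \<le> CARD('n)"
  shows "dist_F_psd M \<le> 96 * ((real CARD('n) - real k) / real CARD('n)) powr (3/2)"
proof -
  define n where "n = CARD('n)"
  define m where "m = n - k"
  have rm: "real m = real n - real k" using kle unfolding m_def n_def by simp
  define r where "r = real m / real n"
  have npos: "0 < real n" using n97 unfolding n_def by simp
  have r0: "0 \<le> r" unfolding r_def by simp
  have m4: "real m \<le> real n / 4" using rm kn unfolding n_def by simp
  have r4: "r \<le> 1/4" using m4 npos unfolding r_def by (simp add: field_simps)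
  have sM: "transpose M = M" using Mk by (simp add: k_psd_closure_def symmetric_mat_def)
  have ppM: "\<And>I. card I = k \<Longrightarrow> principal_psd M I" using Mk by (simp add: k_psd_closure_def)
  obtain P Q where Pin: "P \<in> psd_cone" and Qin: "Q \<in> psd_cone" and MPQ: "M = P - Q" and PQ: "P ** Q = 0"
    and nP: "norm P \<le> norm M" and dQ: "dist_F_psd M \<le> norm Q" and dual: "\<And>X. X \<in> psd_cone \<Longrightarrow> 0 \<le> inner Q X"
    using decomp[OF sM] by blast
  have nP1: "norm P \<le> 1" using nP nM by simp
  have ppc: "principal_psd M (UNIV - T)" if "card T = m" for T :: "'n set"
  proof (rule ppM)
    show "card (UNIV - T) = k" using that kle unfolding m_def n_def by (simp add: card_Diff_subset)
  qed
  define L where "L = {i. real n * (P$i$i)^2 \<le> 4}"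
  define H where "H = UNIV - L"
  have diagP: "(\<Sum>i\<in>UNIV. (P$i$i)^2) \<le> 1"
  proof -
    have "(\<Sum>i\<in>UNIV. (P$i$i)^2) \<le> (\<Sum>i\<in>UNIV. \<Sum>j\<in>UNIV. (P$i$j)^2)"
      by (intro sum_mono member_le_sum) auto
    also have "\<dots> = (norm P)^2" by (simp add: norm_sq_mat)
    also have "\<dots> \<le> 1" using nP1 by (simp add: power_le_one)
    finally show ?thesis .
  qed
  have "real (card H) * 4 \<le> real n"
  proof -
    have "real (card H) * 4 = (\<Sum>i\<in>H. 4)" by simp
    also have "\<dots> \<le> (\<Sum>i\<in>H. real n * (P$i$i)^2)" by (rule sum_mono) (auto simp: H_def L_def)
    also have "\<dots> = real n * (\<Sum>i\<in>H. (P$i$i)^2)" by (simp add: sum_distrib_left)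
    also have "\<dots> \<le> real n * (\<Sum>i\<in>UNIV. (P$i$i)^2)"
      by (intro mult_left_mono sum_mono2) auto
    also have "\<dots> \<le> real n * 1" using diagP by (intro mult_left_mono) auto
    finally show ?thesis by simp
  qed
  moreover have "card L + card H = n" unfolding H_def n_def
    by (metis add.commute card_Diff_subset finite subset_UNIV card_mono le_add_diff_inverse2)
  ultimately have lL: "3 * real n / 4 \<le> real (card L)" by (simp add: field_simps)
  define l where "l = card L"
  have l2: "2 \<le> l" using lL n97 unfolding l_def n_def by simp
  have ml: "m \<le> l" using lL m4 unfolding l_def by simp
  have lpos: "0 < real l" using l2 by simp
  define a where "a = real m / real l"
  define b where "b = real m * (real m - 1) / (real l * (real l - 1))"
  define R where "R = (\<Sum>i\<in>L. \<Sum>j\<in>UNIV. (Q$i$j)^2)"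
  define D where "D = (\<Sum>i\<in>L. P$i$i * Q$i$i)"
  define G where "G = (\<Sum>i\<in>L. \<Sum>j\<in>L. P$i$j * Q$i$j)"
  have avg: "(norm Q)^2 \<le> 2 * a * R + (a - b) * D + b * G"
    unfolding a_def b_def R_def D_def G_def l_def
    by (rule average[OF ml[unfolded l_def] l2[unfolded l_def]]) (rule perT[OF Pin Qin MPQ PQ dual ppc])
  have a0: "0 \<le> a" unfolding a_def by simp
  have b0: "0 \<le> b" unfolding b_def using l2 by (cases m) auto
  have ba: "b \<le> a^2"
  proof -
    have "real m * (real m - 1) * (real l * real l) \<le> real m * real m * (real l * (real l - 1))"
    proof -
      have "real m * real l \<le> real l * real l" using ml by (intro mult_right_mono) auto
      then have h: "real m * (real m * real l) \<le> real m * (real l * real l)"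
        by (intro mult_left_mono) auto
      then show ?thesis by (simp add: algebra_simps)
    qed
    then show ?thesis unfolding a_def b_def using l2
      by (simp add: field_simps power2_eq_square)
  qed
  have R: "R \<le> (norm Q)^2"
    unfolding R_def norm_sq_mat by (rule sum_mono2) (auto intro!: sum_nonneg)
  have Q0: "\<And>i. 0 \<le> Q$i$i" using diag_nonneg[OF Qin] .
  have D0: "0 \<le> D" unfolding D_def using diag_nonneg[OF Pin] Q0 by (intro sum_nonneg mult_nonneg_nonneg) auto
  define tau where "tau = 2 / sqrt (real n)"
  have Ptau: "P$i$i \<le> tau" if "i \<in> L" for i
  proof -
    have "(P$i$i)^2 \<le> 4 / real n" using that npos by (simp add: L_def field_simps)
    then have "sqrt ((P$i$i)^2) \<le> sqrt (4 / real n)" by (rule real_sqrt_le_mono)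
    then show ?thesis using diag_nonneg[OF Pin, of i] by (simp add: tau_def real_sqrt_divide)
  qed
  obtain T0 :: "'n set" where T0: "card T0 = m"
    using obtain_subset_with_card_n[of m "UNIV :: 'n set"] kle unfolding m_def n_def by auto
  have trQ: "(\<Sum>i\<in>UNIV. Q$i$i) \<le> sqrt m * norm Q"
    by (rule trace_bound[OF Pin Qin MPQ PQ ppc[OF T0] T0])
  have D: "D \<le> tau * (sqrt m * norm Q)"
  proof -
    have "D \<le> (\<Sum>i\<in>L. tau * Q$i$i)" unfolding D_def
      using Ptau Q0 by (intro sum_mono mult_right_mono) auto
    also have "\<dots> \<le> (\<Sum>i\<in>UNIV. tau * Q$i$i)"
      using Q0 by (intro sum_mono2) (auto simp: tau_def)
    also have "\<dots> = tau * (\<Sum>i\<in>UNIV. Q$i$i)" by (simp add: sum_distrib_left)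
    also have "\<dots> \<le> tau * (sqrt m * norm Q)" using trQ by (intro mult_left_mono) (auto simp: tau_def)
    finally show ?thesis .
  qed
  have G: "G \<le> norm Q"
  proof -
    define PL where "PL = (\<chi> i j. if i \<in> L then (if j \<in> L then P$i$j else 0) else 0)"
    have e1: "PL$i$j * Q$i$j = (if i \<in> L then (if j \<in> L then P$i$j * Q$i$j else 0) else 0)" for i j
      by (simp add: PL_def)
    have "inner PL Q = G" unfolding inner_mat e1 G_def by (rule sum_if2)
    moreover have "inner PL Q \<le> norm PL * norm Q" by (rule norm_cauchy_schwarz)
    moreover have "norm PL \<le> 1"
    proof -
      have "(norm PL)^2 \<le> (norm P)^2"
        unfolding norm_sq_mat PL_def by (intro sum_mono) (auto simp: zero_le_power2)
      then have "norm PL \<le> norm P" using norm_ge_zero power2_le_imp_le by blast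
      then show ?thesis using nP1 by simp
    qed
    ultimately show ?thesis by (metis mult_le_cancel_right1 norm_ge_zero order_trans mult.commute mult_right_mono mult_1)
  qed
  define q where "q = norm Q"
  have q0: "0 \<le> q" unfolding q_def by simp
  have "q^2 \<le> 2 * a * q^2 + a * (2 * sqrt r) * q + a^2 * q"
  proof -
    have t1: "2 * a * R \<le> 2 * a * q^2" using R a0 unfolding q_def by (intro mult_left_mono) auto
    have t2: "(a - b) * D \<le> a * D" using b0 D0 by (simp add: algebra_simps)
    have t3: "a * D \<le> a * (tau * (sqrt m * q))" using D a0 unfolding q_def by (intro mult_left_mono) auto
    have t4: "tau * sqrt m = 2 * sqrt r" unfolding tau_def r_def using npos by (simp add: real_sqrt_divide)
    have t5: "b * G \<le> a^2 * q"
    proof -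
      have "b * G \<le> b * q" using G b0 unfolding q_def by (intro mult_left_mono) auto
      also have "\<dots> \<le> a^2 * q" using ba q0 by (intro mult_right_mono) auto
      finally show ?thesis .
    qed
    have "a * (tau * (sqrt m * q)) = a * (2 * sqrt r) * q" using t4 by (simp add: mult_ac)
    then show ?thesis using avg t1 t2 t3 t5 unfolding q_def by linarith
  qed
  moreover have "a \<le> 4/3 * r"
  proof -
    have "real m / real l \<le> real m / (3 * real n / 4)"
      using lL npos unfolding l_def by (intro divide_left_mono) auto
    then show ?thesis unfolding a_def r_def using npos by (simp add: field_simps)
  qed
  moreover have "a \<le> 1/3"
  proof -
    have "real m / real l \<le> (real n / 4) / real l" using m4 lpos by (intro divide_right_mono) auto
    also have "\<dots> \<le> (real n / 4) / (3 * real n / 4)" using lL npos unfolding l_def by (intro divide_left_mono) auto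
    also have "\<dots> = 1/3" using npos by simp
    finally show ?thesis unfolding a_def .
  qed
  ultimately have "q \<le> 96 * (r * sqrt r)"
    using final_arith[OF q0 a0 _ r4 _ refl r0] by blast
  moreover have "(real CARD('n) - real k) / real CARD('n) = r" unfolding r_def rm n_def ..
  ultimately show ?thesis using dQ powr_32[OF r0] unfolding q_def by simp
qed

theorem theorem2:
  fixes k :: nat
  assumes "CARD('n::finite) \<ge> 97"
    and "3 * real CARD('n) / 4 \<le> real k" and "k \<le> CARD('n)"
  shows "dist_F_bar (k_psd_closure k :: (real^'n^'n) set)
           \<le> 96 * ((real CARD('n) - real k) / real CARD('n)) powr (3/2)"
proof -
  define a :: 'n where "a = undefined"
  define E :: "real^'n^'n" where "E = (\<chi> i j. if i = a then (if j = a then 1 else 0) else 0)"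
  have "E \<in> k_psd_closure k"
    unfolding k_psd_closure_def symmetric_mat_def principal_psd_def
  proof (intro CollectI conjI allI impI)
    show "transpose E = E" by (simp add: E_def transpose_def vec_eq_iff)
  next
    fix I :: "'n set" and x :: "'n \<Rightarrow> real"
    have "0 \<le> x i * E$i$j * x j" for i j by (simp add: E_def)
    then show "0 \<le> (\<Sum>i\<in>I. \<Sum>j\<in>I. x i * E $ i $ j * x j)" by (intro sum_nonneg) auto
  qed
  moreover have "frob_norm E = 1"
  proof -
    have e: "(E$i$j)^2 = (if i \<in> {a} then (if j \<in> {a} then 1 else 0) else 0)" for i j
      by (simp add: E_def)
    have "(\<Sum>i\<in>UNIV. \<Sum>j\<in>UNIV. (E$i$j)^2) = (\<Sum>i\<in>{a}. \<Sum>j\<in>{a}. (1::real))"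
      unfolding e by (rule sum_if2)
    then show ?thesis by (simp add: frob_norm_def)
  qed
  ultimately have ne: "{M \<in> k_psd_closure k. frob_norm M = 1} \<noteq> ({} :: (real^'n^'n) set)" by blast
  show ?thesis
    unfolding dist_F_bar_def
  proof (rule cSUP_least[OF ne])
    fix M :: "real^'n^'n" assume "M \<in> {M \<in> k_psd_closure k. frob_norm M = 1}"
    then have "M \<in> k_psd_closure k" "norm M = 1" by (auto simp: frob_norm_eq)
    then show "dist_F_psd M \<le> 96 * ((real CARD('n) - real k) / real CARD('n)) powr (3/2)"
      using main_bound assms by blast
  qed
qed


end
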